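(* Consider the problem, assumptions and the algorithm DProxSGT described in the context. Then for every $t\ge1$, $$\mathbb{E}\big[\|\mathbf{X}_\perp^t\|^2\big]\le\frac{1+\rho^2}{2}\mathbb{E}\big[\|\mathbf{X}_\perp^{t-1}\|^2\big]+\frac{2\rho^2\eta^2}{1-\rho^2}\mathbb{E}\big[\|\mathbf{Y}_\perp^{t-1}\|^2\big].$$
   Context: Problem: $n\ge1$ workers, $d\ge1$. For each $i$, $\mathcal{D}_i$ is a distribution, $F_i(\cdot,\xi):\mathbb{R}^d\to\mathbb{R}$, $f_i(\mathbf{x})=\mathbb{E}_{\xi_i\sim\mathcal{D}_i}[F_i(\mathbf{x},\xi_i)]$, $f=\frac1n\sum_if_i$, $\phi=f+r$. Assumptions: $r$ is closed convex; each $f_i$ is $L$-smooth on $\mathrm{dom}(r)$; $\min\phi>-\infty$. Mixing matrix $\mathbf{W}\in\mathbb{R}^{n\times n}$ on a connected graph: doubly stochastic, $\mathbf{W}_{ij}=0$ if $i\ne j$ are not neighbors, $\mathrm{Null}(\mathbf{W}-\mathbf{I})=\mathrm{span}\{\mathbf{1}\}$, $\rho:=\|\mathbf{W}-\mathbf{J}\|_2<1$ with $\mathbf{J}=\mathbf{1}\mathbf{1}^\top/n$. Stochastic gradients: samples $\{\xi_i^t\}$ independent; for all $i$ and $\mathbf{x}\in\mathrm{dom}(r)$, $\mathbb{E}_{\xi_i}[\nabla F_i(\mathbf{x},\xi_i)]=\nabla f_i(\mathbf{x})$ and $\mathbb{E}_{\xi_i}\|\nabla F_i(\mathbf{x},\xi_i)-\nabla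 f_i(\mathbf{x})\|^2\le\sigma^2$. Algorithm DProxSGT with step size $\eta>0$: initialize $\mathbf{x}_i^0$, $\mathbf{y}_i^{-1}=\mathbf{0}$, $\nabla F_i(\mathbf{x}_i^{-1},\xi_i^{-1})=\mathbf{0}$. For $t=0,1,\dots$, node $i$ draws $\xi_i^t\sim\mathcal{D}_i$ and sets $\mathbf{y}_i^{t-1/2}=\mathbf{y}_i^{t-1}+\nabla F_i(\mathbf{x}_i^t,\xi_i^t)-\nabla F_i(\mathbf{x}_i^{t-1},\xi_i^{t-1})$, $\mathbf{y}_i^t=\sum_j\mathbf{W}_{ji}\mathbf{y}_j^{t-1/2}$, $\mathbf{x}_i^{t+1/2}=\mathrm{prox}_{\eta r}(\mathbf{x}_i^t-\eta\mathbf{y}_i^t)$ with $\mathrm{prox}_{\eta r}(\mathbf{z})=\arg\min_{\mathbf{u}}\{r(\mathbf{u})+\frac1{2\eta}\|\mathbf{u}-\mathbf{z}\|^2\}$, $\mathbf{x}_i^{t+1}=\sum_j\mathbf{W}_{ji}\mathbf{x}_j^{t+1/2}$. Notation: $\mathbf{X}^t=[\mathbf{x}_1^t,\dots,\mathbf{x}_n^t]$, $\mathbf{Y}^t=[\mathbf{y}_1^t,\dots,\mathbf{y}_n^t]$; $\|\cdot\|$ Frobenius norm; $\mathbf{X}_\perp=\mathbf{X}(\mathbf{I}-\mathbf{J})$; $\mathbb{E}$ full expectation. *)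

theory Defs
  imports "HOL-Probability.Probability"
begin

definition edom :: "('a::real_vector \<Rightarrow> ereal) \<Rightarrow> 'a set" where
  "edom r = {x. r x < \<infinity>}"

definition closed_proper_convex :: "('a::real_normed_vector \<Rightarrow> ereal) \<Rightarrow> bool" where
  "closed_proper_convex r \<longleftrightarrow>
     closed {(x, t::real). r x \<le> ereal t} \<and>
     convex {(x, t::real). r x \<le> ereal t} \<and>
     (\<forall>x. r x \<noteq> -\<infinity>) \<and> (\<exists>x. r x \<noteq> \<infinity>)"

definition prox :: "real \<Rightarrow> ('a::real_normed_vector \<Rightarrow> ereal) \<Rightarrow> 'a \<Rightarrow> 'a" where
  "prox \<eta> r z = (ARG_MIN (\<lambda>u. r u + ereal (norm (u - z)^2 / (2 * \<eta>))) u. True)"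

text \<open>State after t steps: (X^t, Y^(t-1), G^(t-1)) where G^(t-1)_i = grad F_i(x_i^(t-1), xi_i^(t-1)).
  Initially Y^(-1) = 0 and G^(-1) = 0.  The sample path is xi t i = xi_i^t.\<close>
fun dpsgt_state ::
  "real^'n^'n \<Rightarrow> real \<Rightarrow> (real^'d \<Rightarrow> ereal) \<Rightarrow> ('n \<Rightarrow> real^'d \<Rightarrow> 's \<Rightarrow> real^'d)
   \<Rightarrow> ('n::finite \<Rightarrow> real^'d) \<Rightarrow> (nat \<Rightarrow> 'n \<Rightarrow> 's) \<Rightarrow> nat
   \<Rightarrow> ('n \<Rightarrow> real^'d) \<times> ('n \<Rightarrow> real^'d) \<times> ('n \<Rightarrow> real^'d)" where
  "dpsgt_state W \<eta> r gF x0 xi 0 = (x0, (\<lambda>i. 0), (\<lambda>i. 0))"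
| "dpsgt_state W \<eta> r gF x0 xi (Suc t) =
     (let (X, Yp, Gp) = dpsgt_state W \<eta> r gF x0 xi t;
          G  = (\<lambda>i. gF i (X i) (xi t i));
          Yh = (\<lambda>i. Yp i + G i - Gp i);
          Y  = (\<lambda>i. \<Sum>j\<in>UNIV. W $ j $ i *\<^sub>R Yh j);
          Xh = (\<lambda>i. prox \<eta> r (X i - \<eta> *\<^sub>R Y i));
          X' = (\<lambda>i. \<Sum>j\<in>UNIV. W $ j $ i *\<^sub>R Xh j)
      in (X', Y, G))"

definition dpsgt_X where
  "dpsgt_X W \<eta> r gF x0 xi t = fst (dpsgt_state W \<eta> r gF x0 xi t)"

text \<open>Y^t (columns y_i^t), computed in iteration t.\<close>
definition dpsgt_Y where
  "dpsgt_Y W \<eta> r gF x0 xi t = fst (snd (dpsgt_state W \<eta> r gF x0 xi (Suc t)))"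

text \<open>Squared Frobenius norm of X_perp = X (I - J): sum_i ||x_i - mean||^2.\<close>
definition perp_sq :: "('n::finite \<Rightarrow> 'a::real_normed_vector) \<Rightarrow> real" where
  "perp_sq X = (\<Sum>i\<in>UNIV. (norm (X i - (1 / real CARD('n)) *\<^sub>R (\<Sum>j\<in>UNIV. X j)))\<^sup>2)"

definition Jmat :: "real^'n^'n" where
  "Jmat = (\<chi> i j. 1 / real CARD('n::finite))"

end

theory Submission
  imports Defs
begin


lemma affine_minorant:
  fixes r :: "'a::euclidean_space \<Rightarrow> ereal"
  assumes "closed_proper_convex r"
  shows "\<exists>a b. \<forall>x. ereal (inner a x + b) \<le> r x"
proof -
  let ?S = "{(x, t::real). r x \<le> ereal t}"
  from assms have cl: "closed ?S" and cv: "convex ?S" and nm: "\<And>x. r x \<noteq> -\<infinity>"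
    and ex: "\<exists>x. r x \<noteq> \<infinity>" unfolding closed_proper_convex_def by auto
  obtain x0 where "r x0 \<noteq> \<infinity>" using ex by auto
  then obtain v0 where v0: "r x0 = ereal v0" using nm[of x0] by (cases "r x0") auto
  have "(x0, v0 - 1) \<notin> ?S" using v0 by auto
  from separating_hyperplane_closed_point[OF cv cl this]
  obtain a b where ab: "inner a (x0, v0 - 1) < b" "\<forall>z\<in>?S. inner a z > b" by blast
  obtain a1 a2 where a: "a = (a1, a2)" by (cases a)
  have "(x0, v0) \<in> ?S" using v0 by auto
  with ab a have h1: "inner a1 x0 + a2 * v0 > b" "inner a1 x0 + a2 * (v0 - 1) < b" by auto
  hence a2: "a2 > 0" by (simp add: algebra_simps)
  show ?thesis
  proof (intro exI allI)
    fix x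
    show "ereal (inner (- (1/a2) *\<^sub>R a1) x + b / a2) \<le> r x"
    proof (cases "r x")
      case (real v)
      hence "(x, v) \<in> ?S" by auto
      with ab a have "inner a1 x + a2 * v > b" by auto
      hence "(b - inner a1 x) / a2 < v" using a2 by (simp add: field_simps)
      hence "inner (- (1/a2) *\<^sub>R a1) x + b / a2 \<le> v" using a2 by (simp add: field_simps)
      thus ?thesis using real by simp
    qed (use nm in auto)
  qed
qed



lemma prox_exists:
  fixes r :: "'a::euclidean_space \<Rightarrow> ereal"
  assumes cpc: "closed_proper_convex r" and eta: "\<eta> > 0"
  shows "\<exists>p. \<forall>u. r p + ereal (norm (p - z)^2 / (2 * \<eta>)) \<le> r u + ereal (norm (u - z)^2 / (2 * \<eta>))"
proof -
  let ?S = "{(x, t::real). r x \<le> ereal t}"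
  define q where "q u = norm (u - z)^2 / (2 * \<eta>)" for u
  from cpc have cl: "closed ?S" and nm: "\<And>x. r x \<noteq> -\<infinity>"
    and ex: "\<exists>x. r x \<noteq> \<infinity>" unfolding closed_proper_convex_def by auto
  obtain a b where ab: "\<And>x. ereal (inner a x + b) \<le> r x" using affine_minorant[OF cpc] by blast
  obtain x1 where "r x1 \<noteq> \<infinity>" using ex by auto
  then obtain v1 where v1: "r x1 = ereal v1" using nm[of x1] by (cases "r x1") auto
  define m where "m = v1 + q x1"
  define h where "h = (\<lambda>(u, t). t + q u)"
  have hc: "continuous_on UNIV h" unfolding h_def q_def case_prod_beta
    by (intro continuous_intros) (use eta in auto)
  define K where "K = ?S \<inter> {p. h p \<le> m}"
  have Kcl: "closed K" unfolding K_def
    by (intro closed_Int cl closed_Collect_le continuous_on_const) (use hc in auto)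
  define C1 where "C1 = 2 * \<eta> * (m - b + norm a * norm z)"
  define C2 where "C2 = 2 * \<eta> * norm a"
  define R where "R = max 1 (\<bar>C1\<bar> + C2)"
  have Kb: "norm (u - z) \<le> R \<and> t \<le> m \<and> t \<ge> - norm a * (R + norm z) + b" if "(u, t) \<in> K" for u t
  proof -
    from that have rt: "r u \<le> ereal t" and ht: "t + q u \<le> m" unfolding K_def h_def by auto
    have lb: "inner a u + b \<le> t" using ab[of u] rt by (metis ereal_less_eq(3) order.trans)
    have "\<bar>inner a u\<bar> \<le> norm a * norm u" by (rule Cauchy_Schwarz_ineq2)
    have nu: "norm u \<le> norm (u - z) + norm z" by (metis norm_triangle_sub add.commute)
    have "q u \<le> m - t" using ht by simp
    also have "\<dots> \<le> m - b + norm a * norm u" using lb \<open>\<bar>inner a u\<bar> \<le> _\<close> by linarith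
    also have "\<dots> \<le> m - b + norm a * (norm (u - z) + norm z)"
      using nu by (simp add: mult_left_mono)
    finally have qX: "q u \<le> m - b + norm a * (norm (u - z) + norm z)" .
    have "norm (u - z)^2 = 2 * \<eta> * q u" unfolding q_def using eta by simp
    also have "\<dots> \<le> 2 * \<eta> * (m - b + norm a * (norm (u - z) + norm z))"
      using qX eta by (simp add: mult_left_mono)
    also have "\<dots> = C1 + C2 * norm (u - z)" unfolding C1_def C2_def by (simp add: algebra_simps)
    finally have H: "norm (u - z)^2 \<le> C1 + C2 * norm (u - z)" .
    have nR: "norm (u - z) \<le> R"
    proof (cases "norm (u - z) \<le> 1")
      case True thus ?thesis unfolding R_def by simp
    next
      case False
      have C2: "C2 \<ge> 0" unfolding C2_def using eta by simp
      have "norm (u - z) * norm (u - z) \<le> \<bar>C1\<bar> + C2 * norm (u - z)"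
        using H by (simp add: power2_eq_square)
      also have "\<dots> \<le> \<bar>C1\<bar> * norm (u - z) + C2 * norm (u - z)"
        using False by (simp add: mult_left_mono[of 1 "norm (u - z)" "\<bar>C1\<bar>", simplified])
      also have "\<dots> = (\<bar>C1\<bar> + C2) * norm (u - z)" by (simp add: algebra_simps)
      finally have "norm (u - z) \<le> \<bar>C1\<bar> + C2" using False by (metis mult_right_le_imp_le norm_ge_zero linorder_not_le order.strict_trans zero_less_one)
      thus ?thesis unfolding R_def by simp
    qed
    have "q u \<ge> 0" unfolding q_def using eta by simp
    hence "t \<le> m" using ht by simp
    moreover have "t \<ge> - norm a * (R + norm z) + b"
    proof -
      have "norm u \<le> R + norm z" using nu nR by simp
      hence "norm a * norm u \<le> norm a * (R + norm z)" by (simp add: mult_left_mono)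
      thus ?thesis using lb \<open>\<bar>inner a u\<bar> \<le> _\<close> by linarith
    qed
    ultimately show ?thesis using nR by simp
  qed
  have "bounded K"
  proof -
    define B where "B = R + norm z + \<bar>m\<bar> + \<bar>- norm a * (R + norm z) + b\<bar>"
    have "norm p \<le> B" if "p \<in> K" for p
    proof -
      obtain u t where p: "p = (u, t)" by (cases p)
      from Kb[of u t] that p have *: "norm (u - z) \<le> R" "t \<le> m" "t \<ge> - norm a * (R + norm z) + b" by auto
      have "norm p \<le> norm u + norm t" unfolding p by (rule norm_Pair_le)
      also have "norm u \<le> R + norm z" using * by (metis norm_triangle_sub add.commute order.trans add_right_mono)
      also have "norm t \<le> \<bar>m\<bar> + \<bar>- norm a * (R + norm z) + b\<bar>" using * by auto
      finally show ?thesis unfolding B_def by simp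
    qed
    thus ?thesis unfolding bounded_iff by blast
  qed
  hence "compact K" using Kcl by (simp add: compact_eq_bounded_closed)
  moreover have "(x1, v1) \<in> K" unfolding K_def h_def m_def using v1 by simp
  hence "K \<noteq> {}" by auto
  moreover have "continuous_on K h" using hc by (rule continuous_on_subset) simp
  ultimately obtain p0 where p0: "p0 \<in> K" "\<And>y. y \<in> K \<Longrightarrow> h p0 \<le> h y"
    using continuous_attains_inf[of K h] by blast
  obtain p tp where pp: "p0 = (p, tp)" by (cases p0)
  have rp: "r p \<le> ereal tp" and hp: "tp + q p \<le> m" using p0(1) unfolding pp K_def h_def by auto
  show ?thesis
  proof (intro exI allI)
    fix u
    have "r p + ereal (q p) \<le> ereal tp + ereal (q p)" using rp by (rule add_right_mono)
    also have "\<dots> = ereal (tp + q p)" by simp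
    also have "\<dots> \<le> r u + ereal (q u)"
    proof (cases "r u")
      case (real v)
      show ?thesis
      proof (cases "v + q u \<le> m")
        case True
        hence "(u, v) \<in> K" unfolding K_def h_def using real by simp
        from p0(2)[OF this] have "tp + q p \<le> v + q u" unfolding pp h_def by simp
        thus ?thesis using real by simp
      next
        case False thus ?thesis using real hp by simp
      qed
    qed (use nm in auto)
    finally show "r p + ereal (norm (p - z)^2 / (2 * \<eta>)) \<le> r u + ereal (norm (u - z)^2 / (2 * \<eta>))"
      unfolding q_def .
  qed
qed



lemma prox_min:
  fixes r :: "'a::euclidean_space \<Rightarrow> ereal"
  assumes cpc: "closed_proper_convex r" and eta: "\<eta> > 0"
  shows "r (prox \<eta> r z) + ereal (norm (prox \<eta> r z - z)^2 / (2 * \<eta>)) \<le> r u + ereal (norm (u - z)^2 / (2 * \<eta>))"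
proof -
  define g where "g u = r u + ereal (norm (u - z)^2 / (2 * \<eta>))" for u
  obtain p where p: "\<And>u. g p \<le> g u" using prox_exists[OF cpc eta, of z] unfolding g_def by blast
  have "is_arg_min g (\<lambda>u. True) p" unfolding is_arg_min_def using p by (simp add: not_less)
  hence "is_arg_min g (\<lambda>u. True) (prox \<eta> r z)"
    unfolding prox_def arg_min_def g_def[symmetric] by (rule someI)
  hence "g (prox \<eta> r z) \<le> g u" unfolding is_arg_min_def by (simp add: not_less)
  thus ?thesis unfolding g_def .
qed

lemma prox_var:
  fixes r :: "'a::euclidean_space \<Rightarrow> ereal"
  assumes cpc: "closed_proper_convex r" and eta: "\<eta> > 0"
    and p: "p = prox \<eta> r z" and q: "q = prox \<eta> r w"
    and rp: "r p = ereal P" and rq: "r q = ereal Q" and s: "0 < s" "s \<le> 1"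
  shows "2 * \<eta> * (P - Q) \<le> 2 * inner (p - z) (q - p) + s * norm (q - p)^2"
proof -
  let ?S = "{(x, t::real). r x \<le> ereal t}"
  from cpc have cv: "convex ?S" unfolding closed_proper_convex_def by auto
  have "(p, P) \<in> ?S" "(q, Q) \<in> ?S" using rp rq by auto
  from convexD[OF cv this, of "1 - s" s] s
  have "((1 - s) *\<^sub>R p + s *\<^sub>R q, (1 - s) * P + s * Q) \<in> ?S" by simp
  hence ru: "r (p + s *\<^sub>R (q - p)) \<le> ereal ((1 - s) * P + s * Q)"
    by (simp add: algebra_simps)
  have "ereal P + ereal (norm (p - z)^2 / (2 * \<eta>)) \<le> r (p + s *\<^sub>R (q - p)) + ereal (norm (p + s *\<^sub>R (q - p) - z)^2 / (2 * \<eta>))"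
    using prox_min[OF cpc eta, of z "p + s *\<^sub>R (q - p)"] p rp by simp
  also have "\<dots> \<le> ereal ((1 - s) * P + s * Q) + ereal (norm (p + s *\<^sub>R (q - p) - z)^2 / (2 * \<eta>))"
    using ru by (rule add_right_mono)
  finally have "P + norm (p - z)^2 / (2 * \<eta>) \<le> (1 - s) * P + s * Q + norm (p + s *\<^sub>R (q - p) - z)^2 / (2 * \<eta>)"
    by simp
  hence "2 * \<eta> * P + norm (p - z)^2 \<le> 2 * \<eta> * ((1 - s) * P + s * Q) + norm (p + s *\<^sub>R (q - p) - z)^2"
  proof -
    fix A C B :: real
    assume H: "P + A / (2 * \<eta>) \<le> B + C / (2 * \<eta>)"
    have "2 * \<eta> * (P + A / (2 * \<eta>)) \<le> 2 * \<eta> * (B + C / (2 * \<eta>))"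
      using H eta by (intro mult_left_mono) auto
    thus "2 * \<eta> * P + A \<le> 2 * \<eta> * B + C" using eta by (simp add: distrib_left)
  qed
  moreover have "norm (p + s *\<^sub>R (q - p) - z)^2 = norm (p - z)^2 + 2 * s * inner (p - z) (q - p) + s^2 * norm (q - p)^2"
  proof -
    have e: "p + s *\<^sub>R (q - p) - z = (p - z) + s *\<^sub>R (q - p)" by (simp add: algebra_simps)
    show ?thesis unfolding e power2_norm_eq_inner
      by (simp add: inner_add_left inner_add_right inner_commute algebra_simps power2_eq_square)
  qed
  ultimately have "s * (2 * \<eta> * (P - Q)) \<le> s * (2 * inner (p - z) (q - p) + s * norm (q - p)^2)"
    by (simp add: algebra_simps power2_eq_square)
  thus ?thesis using s by simp
qed

lemma prox_nonexp:
  fixes r :: "'a::euclidean_space \<Rightarrow> ereal"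
  assumes cpc: "closed_proper_convex r" and eta: "\<eta> > 0"
  shows "norm (prox \<eta> r z - prox \<eta> r w) \<le> norm (z - w)"
proof -
  define p where "p = prox \<eta> r z"
  define q where "q = prox \<eta> r w"
  from cpc have nm: "\<And>x. r x \<noteq> -\<infinity>" and ex: "\<exists>x. r x \<noteq> \<infinity>"
    unfolding closed_proper_convex_def by auto
  obtain x1 where x1: "r x1 \<noteq> \<infinity>" using ex by auto
  have fin: "r (prox \<eta> r y) \<noteq> \<infinity>" for y
  proof
    assume "r (prox \<eta> r y) = \<infinity>"
    hence "r x1 + ereal (norm (x1 - y)^2 / (2 * \<eta>)) = \<infinity>"
      using prox_min[OF cpc eta, of y x1] by simp
    thus False using x1 nm[of x1] by simp
  qed
  obtain P where rp: "r p = ereal P" using fin[of z] nm[of p] unfolding p_def by (cases "r p") (auto simp: p_def)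
  obtain Q where rq: "r q = ereal Q" using fin[of w] nm[of q] unfolding q_def by (cases "r q") (auto simp: q_def)
  define N where "N = norm (p - q)^2"
  have key: "N - inner (z - w) (p - q) \<le> s * N" if s: "0 < s" "s \<le> 1" for s
  proof -
    have a: "2 * \<eta> * (P - Q) \<le> 2 * inner (p - z) (q - p) + s * norm (q - p)^2"
      by (rule prox_var[OF cpc eta p_def q_def rp rq s])
    have b: "2 * \<eta> * (Q - P) \<le> 2 * inner (q - w) (p - q) + s * norm (p - q)^2"
      by (rule prox_var[OF cpc eta q_def p_def rq rp s])
    have "norm (q - p) = norm (p - q)" by (rule norm_minus_commute)
    have "inner (p - z) (q - p) + inner (q - w) (p - q) = inner (z - w) (p - q) - N"
      unfolding N_def power2_norm_eq_inner by (simp add: inner_diff_left inner_diff_right inner_commute)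
    moreover have "2 * \<eta> * (P - Q) \<le> 2 * inner (p - z) (q - p) + s * norm (p - q)^2"
      using a \<open>norm (q - p) = norm (p - q)\<close> by simp
    moreover have "2 * \<eta> * (P - Q) + 2 * \<eta> * (Q - P) = 0" by (simp add: algebra_simps)
    ultimately show ?thesis using b unfolding N_def by linarith
  qed
  have N0: "N \<ge> 0" unfolding N_def by simp
  have NI: "N \<le> inner (z - w) (p - q)"
  proof (rule ccontr)
    assume "\<not> ?thesis"
    hence D: "N - inner (z - w) (p - q) > 0" by simp
    have "N > 0"
    proof (rule ccontr)
      assume "\<not> N > 0" hence "N = 0" using N0 by simp
      hence "p - q = 0" unfolding N_def by simp
      thus False using D \<open>N = 0\<close> by simp
    qed
    define s where "s = min 1 ((N - inner (z - w) (p - q)) / (2 * N))"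
    have s: "0 < s" "s \<le> 1" unfolding s_def using D \<open>N > 0\<close> by auto
    have "s * N \<le> ((N - inner (z - w) (p - q)) / (2 * N)) * N"
      unfolding s_def using \<open>N > 0\<close> by (intro mult_right_mono) auto
    also have "\<dots> = (N - inner (z - w) (p - q)) / 2" using \<open>N > 0\<close> by simp
    finally have "s * N \<le> (N - inner (z - w) (p - q)) / 2" .
    thus False using key[OF s] D by argo
  qed
  also have "\<dots> \<le> norm (z - w) * norm (p - q)" by (rule norm_cauchy_schwarz)
  finally have "norm (p - q) * norm (p - q) \<le> norm (z - w) * norm (p - q)"
    unfolding N_def by (simp add: power2_eq_square)
  hence "norm (p - q) \<le> norm (z - w)"
    by (metis mult_right_le_imp_le norm_ge_zero order_le_less mult_zero_right order_refl zero_less_norm_iff norm_zero nle_le)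
  thus ?thesis unfolding p_def q_def .
qed



lemma norm_add_sq: "(norm (a + b))\<^sup>2 = (norm a)\<^sup>2 + 2 * inner a b + (norm (b::'a::real_inner))\<^sup>2"
  unfolding power2_norm_eq_inner by (simp add: inner_add_left inner_add_right inner_commute)

lemma perp_min:
  fixes X :: "'n::finite \<Rightarrow> 'a::real_inner"
  shows "perp_sq X \<le> (\<Sum>i\<in>UNIV. (norm (X i - c))\<^sup>2)"
proof -
  define m where "m = (1 / real CARD('n)) *\<^sub>R (\<Sum>j\<in>UNIV. X j)"
  have n0: "real CARD('n) > 0" by simp
  have s0: "(\<Sum>i\<in>UNIV. X i - m) = 0"
    unfolding m_def sum_subtractf using n0 by (simp add: sum_constant_scaleR)
  have "(\<Sum>i\<in>UNIV. (norm (X i - c))\<^sup>2) = (\<Sum>i\<in>UNIV. (norm (X i - m))\<^sup>2 + 2 * inner (X i - m) (m - c) + (norm (m - c))\<^sup>2)"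
  proof (rule sum.cong[OF refl])
    fix i
    have e: "X i - c = (X i - m) + (m - c)" by simp
    show "(norm (X i - c))\<^sup>2 = (norm (X i - m))\<^sup>2 + 2 * inner (X i - m) (m - c) + (norm (m - c))\<^sup>2"
      unfolding e by (rule norm_add_sq)
  qed
  also have "\<dots> = (\<Sum>i\<in>UNIV. (norm (X i - m))\<^sup>2) + 2 * inner (\<Sum>i\<in>UNIV. X i - m) (m - c) + real CARD('n) * (norm (m - c))\<^sup>2"
    by (simp add: sum.distrib sum_distrib_left inner_sum_left)
  also have "\<dots> \<ge> (\<Sum>i\<in>UNIV. (norm (X i - m))\<^sup>2)" unfolding s0 by simp
  finally show ?thesis unfolding perp_sq_def m_def .
qed

lemma perp_nonexp:
  fixes A :: "'n::finite \<Rightarrow> 'a::real_inner" and P :: "'a \<Rightarrow> 'a"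
  assumes P: "\<And>x y. norm (P x - P y) \<le> norm (x - y)"
  shows "perp_sq (\<lambda>i. P (A i)) \<le> perp_sq A"
proof -
  define m where "m = (1 / real CARD('n)) *\<^sub>R (\<Sum>j\<in>UNIV. A j)"
  have "perp_sq (\<lambda>i. P (A i)) \<le> (\<Sum>i\<in>UNIV. (norm (P (A i) - P m))\<^sup>2)" by (rule perp_min)
  also have "\<dots> \<le> (\<Sum>i\<in>UNIV. (norm (A i - m))\<^sup>2)"
    by (intro sum_mono power_mono P) auto
  finally show ?thesis unfolding perp_sq_def m_def .
qed

lemma sq_combo:
  fixes a b :: "'a::real_normed_vector"
  assumes al: "\<alpha> > 0" and eta: "\<eta> \<ge> 0"
  shows "(norm (a - \<eta> *\<^sub>R b))\<^sup>2 \<le> (1 + \<alpha>) * (norm a)\<^sup>2 + (1 + 1 / \<alpha>) * \<eta>\<^sup>2 * (norm b)\<^sup>2"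
proof -
  define x where "x = norm a"
  define y where "y = \<eta> * norm b"
  have "norm (a - \<eta> *\<^sub>R b) \<le> x + y" unfolding x_def y_def using eta
    by (metis abs_of_nonneg norm_scaleR norm_triangle_ineq4)
  hence "(norm (a - \<eta> *\<^sub>R b))\<^sup>2 \<le> (x + y)\<^sup>2" by (intro power_mono) auto
  also have "\<dots> \<le> (1 + \<alpha>) * x\<^sup>2 + (1 + 1 / \<alpha>) * y\<^sup>2"
  proof -
    have "0 \<le> (\<alpha> * x - y)\<^sup>2" by simp
    hence "2 * x * y * \<alpha> \<le> \<alpha> * \<alpha> * x\<^sup>2 + y\<^sup>2" by (simp add: power2_eq_square algebra_simps)
    hence "2 * x * y \<le> \<alpha> * x\<^sup>2 + y\<^sup>2 / \<alpha>" using al by (simp add: field_simps power2_eq_square)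
    thus ?thesis by (simp add: power2_eq_square algebra_simps add_divide_distrib)
  qed
  finally show ?thesis unfolding x_def y_def by (simp add: power_mult_distrib algebra_simps)
qed

lemma perp_combo:
  fixes X Y :: "'n::finite \<Rightarrow> 'a::real_inner"
  assumes al: "\<alpha> > 0" and eta: "\<eta> \<ge> 0"
  shows "perp_sq (\<lambda>i. X i - \<eta> *\<^sub>R Y i) \<le> (1 + \<alpha>) * perp_sq X + (1 + 1 / \<alpha>) * \<eta>\<^sup>2 * perp_sq Y"
proof -
  define mX where "mX = (1 / real CARD('n)) *\<^sub>R (\<Sum>j\<in>UNIV. X j)"
  define mY where "mY = (1 / real CARD('n)) *\<^sub>R (\<Sum>j\<in>UNIV. Y j)"
  have "perp_sq (\<lambda>i. X i - \<eta> *\<^sub>R Y i) \<le> (\<Sum>i\<in>UNIV. (norm ((X i - \<eta> *\<^sub>R Y i) - (mX - \<eta> *\<^sub>R mY)))\<^sup>2)"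
    by (rule perp_min)
  also have "\<dots> = (\<Sum>i\<in>UNIV. (norm ((X i - mX) - \<eta> *\<^sub>R (Y i - mY)))\<^sup>2)"
    by (simp add: algebra_simps)
  also have "\<dots> \<le> (\<Sum>i\<in>UNIV. (1 + \<alpha>) * (norm (X i - mX))\<^sup>2 + (1 + 1 / \<alpha>) * \<eta>\<^sup>2 * (norm (Y i - mY))\<^sup>2)"
    by (intro sum_mono sq_combo al eta)
  also have "\<dots> = (1 + \<alpha>) * perp_sq X + (1 + 1 / \<alpha>) * \<eta>\<^sup>2 * perp_sq Y"
    unfolding perp_sq_def mX_def mY_def by (simp add: sum.distrib sum_distrib_left)
  finally show ?thesis .
qed

lemma vm_inner:
  fixes B :: "real^'n::finite^'n"
  shows "inner (v v* B) w = inner v (B *v w)"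
proof -
  have "inner (v v* B) w = (\<Sum>i\<in>UNIV. \<Sum>j\<in>UNIV. v $ j * B $ j $ i * w $ i)"
    unfolding inner_vec_def vector_matrix_mult_def by (simp add: sum_distrib_right)
  also have "\<dots> = (\<Sum>j\<in>UNIV. \<Sum>i\<in>UNIV. v $ j * B $ j $ i * w $ i)" by (rule sum.swap)
  also have "\<dots> = inner v (B *v w)"
    unfolding inner_vec_def matrix_vector_mult_def by (simp add: sum_distrib_left mult.assoc)
  finally show ?thesis .
qed

lemma vm_norm:
  fixes B :: "real^'n::finite^'n"
  shows "norm (v v* B) \<le> onorm ((*v) B) * norm v"
proof -
  have bl: "bounded_linear ((*v) B)" by simp
  have "(norm (v v* B))\<^sup>2 = inner v (B *v (v v* B))"
    unfolding power2_norm_eq_inner vm_inner ..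
  also have "\<dots> \<le> norm v * norm (B *v (v v* B))" by (rule norm_cauchy_schwarz)
  also have "\<dots> \<le> norm v * (onorm ((*v) B) * norm (v v* B))"
    using onorm[OF bl] by (intro mult_left_mono) auto
  finally have "norm (v v* B) * norm (v v* B) \<le> (onorm ((*v) B) * norm v) * norm (v v* B)"
    by (simp add: power2_eq_square algebra_simps)
  thus ?thesis
    by (metis mult_right_le_imp_le norm_ge_zero order_le_less mult_zero_left onorm_pos_le[OF bl] zero_less_norm_iff norm_zero mult_nonneg_nonneg)
qed

lemma norm_vec_sq: "(norm (x :: real^'d::finite))\<^sup>2 = (\<Sum>k\<in>UNIV. (x $ k)\<^sup>2)"
  unfolding power2_norm_eq_inner inner_vec_def by (simp add: power2_eq_square)

lemma mixing:
  fixes B :: "real^'n::finite^'n" and e :: "'n \<Rightarrow> real^'d::finite"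
  shows "(\<Sum>i\<in>UNIV. (norm (\<Sum>j\<in>UNIV. B $ j $ i *\<^sub>R e j))\<^sup>2) \<le> (onorm ((*v) B))\<^sup>2 * (\<Sum>j\<in>UNIV. (norm (e j))\<^sup>2)"
proof -
  define v where "v k = (\<chi> j. e j $ k)" for k
  have c: "(\<Sum>j\<in>UNIV. B $ j $ i *\<^sub>R e j) $ k = (v k v* B) $ i" for i k
    unfolding v_def vector_matrix_mult_def by (simp add: mult.commute)
  have "(\<Sum>i\<in>UNIV. (norm (\<Sum>j\<in>UNIV. B $ j $ i *\<^sub>R e j))\<^sup>2) = (\<Sum>k\<in>UNIV. (norm (v k v* B))\<^sup>2)"
    unfolding norm_vec_sq c by (rule sum.swap)
  also have "\<dots> \<le> (\<Sum>k\<in>UNIV. (onorm ((*v) B))\<^sup>2 * (norm (v k))\<^sup>2)"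
    by (intro sum_mono) (metis vm_norm power_mono norm_ge_zero power_mult_distrib)
  also have "\<dots> = (onorm ((*v) B))\<^sup>2 * (\<Sum>j\<in>UNIV. (norm (e j))\<^sup>2)"
    unfolding sum_distrib_left[symmetric] norm_vec_sq v_def by (simp add: sum.swap[of "\<lambda>k j. (e j $ k)\<^sup>2"])
  finally show ?thesis .
qed



lemma state_Suc:
  "dpsgt_state W \<eta> r gF x0 xi (Suc t) =
    (let S = dpsgt_state W \<eta> r gF x0 xi t;
         G = (\<lambda>i. gF i (fst S i) (xi t i));
         Y = (\<lambda>i. \<Sum>j\<in>UNIV. W $ j $ i *\<^sub>R (fst (snd S) j + G j - snd (snd S) j))
     in ((\<lambda>i. \<Sum>j\<in>UNIV. W $ j $ i *\<^sub>R prox \<eta> r (fst S j - \<eta> *\<^sub>R Y j)), Y, G))"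
  by (cases "dpsgt_state W \<eta> r gF x0 xi t") (simp add: Let_def)

lemma X_Suc:
  "dpsgt_X W \<eta> r gF x0 xi (Suc t) =
     (\<lambda>i. \<Sum>j\<in>UNIV. W $ j $ i *\<^sub>R prox \<eta> r (dpsgt_X W \<eta> r gF x0 xi t j - \<eta> *\<^sub>R dpsgt_Y W \<eta> r gF x0 xi t j))"
  unfolding dpsgt_X_def dpsgt_Y_def by (cases "dpsgt_state W \<eta> r gF x0 xi t") (simp add: Let_def)

lemma prox_cont:
  fixes r :: "'a::euclidean_space \<Rightarrow> ereal"
  assumes cpc: "closed_proper_convex r" and eta: "\<eta> > 0"
  shows "continuous_on UNIV (prox \<eta> r)"
  unfolding continuous_on_iff
proof (intro ballI allI impI)
  fix x :: "'a" and e :: real assume "e > 0"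
  thus "\<exists>d>0. \<forall>x'\<in>UNIV. dist x' x < d \<longrightarrow> dist (prox \<eta> r x') (prox \<eta> r x) < e"
    using prox_nonexp[OF cpc eta] by (metis dist_norm le_less_trans)
qed

lemma mix_step:
  fixes W :: "real^'n::finite^'n" and Xh :: "'n \<Rightarrow> real^'d::finite"
  assumes W_cols: "\<And>j. (\<Sum>i\<in>UNIV. W $ i $ j) = 1"
  shows "perp_sq (\<lambda>i. \<Sum>j\<in>UNIV. W $ j $ i *\<^sub>R Xh j) \<le> (onorm (\<lambda>v. (W - Jmat) *v v))\<^sup>2 * perp_sq Xh"
proof -
  define m where "m = (1 / real CARD('n)) *\<^sub>R (\<Sum>j\<in>UNIV. Xh j)"
  have n0: "real CARD('n) > 0" by simp
  have s0: "(\<Sum>j\<in>UNIV. Xh j - m) = 0"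
    unfolding m_def sum_subtractf using n0 by (simp add: sum_constant_scaleR del: sum_constant)
  have eq: "(\<Sum>j\<in>UNIV. W $ j $ i *\<^sub>R Xh j) - m = (\<Sum>j\<in>UNIV. (W - Jmat) $ j $ i *\<^sub>R (Xh j - m))" for i
  proof -
    have "(\<Sum>j\<in>UNIV. (W - Jmat) $ j $ i *\<^sub>R (Xh j - m))
        = (\<Sum>j\<in>UNIV. W $ j $ i *\<^sub>R (Xh j - m)) - (1 / real CARD('n)) *\<^sub>R (\<Sum>j\<in>UNIV. Xh j - m)"
      unfolding Jmat_def by (simp add: scaleR_diff_left sum_subtractf scaleR_sum_right scaleR_diff_right del: sum_constant)
    also have "\<dots> = (\<Sum>j\<in>UNIV. W $ j $ i *\<^sub>R Xh j) - (\<Sum>j\<in>UNIV. W $ j $ i) *\<^sub>R m"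
      unfolding s0 by (simp add: scaleR_diff_right sum_subtractf scaleR_sum_left)
    also have "\<dots> = (\<Sum>j\<in>UNIV. W $ j $ i *\<^sub>R Xh j) - m" using W_cols[of i] by simp
    finally show ?thesis by simp
  qed
  have "perp_sq (\<lambda>i. \<Sum>j\<in>UNIV. W $ j $ i *\<^sub>R Xh j) \<le> (\<Sum>i\<in>UNIV. (norm ((\<Sum>j\<in>UNIV. W $ j $ i *\<^sub>R Xh j) - m))\<^sup>2)"
    by (rule perp_min)
  also have "\<dots> = (\<Sum>i\<in>UNIV. (norm (\<Sum>j\<in>UNIV. (W - Jmat) $ j $ i *\<^sub>R (Xh j - m)))\<^sup>2)"
    unfolding eq ..
  also have "\<dots> \<le> (onorm ((*v) (W - Jmat)))\<^sup>2 * (\<Sum>j\<in>UNIV. (norm (Xh j - m))\<^sup>2)"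
    by (rule mixing)
  finally show ?thesis unfolding perp_sq_def m_def by simp
qed

lemma det_bound:
  fixes W :: "real^'n::finite^'n" and X Y :: "'n \<Rightarrow> real^'d::finite"
  assumes cpc: "closed_proper_convex r" and eta: "\<eta> > 0"
    and W_cols: "\<And>j. (\<Sum>i\<in>UNIV. W $ i $ j) = 1"
    and rho_def: "\<rho> = onorm (\<lambda>v. (W - Jmat) *v v)" and rho_lt: "\<rho> < 1"
  shows "perp_sq (\<lambda>i. \<Sum>j\<in>UNIV. W $ j $ i *\<^sub>R prox \<eta> r (X j - \<eta> *\<^sub>R Y j))
     \<le> (1 + \<rho>\<^sup>2) / 2 * perp_sq X + 2 * \<rho>\<^sup>2 * \<eta>\<^sup>2 / (1 - \<rho>\<^sup>2) * perp_sq Y"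
proof -
  have r0: "\<rho> \<ge> 0" unfolding rho_def by (rule onorm_pos_le) simp
  have pX: "perp_sq X \<ge> 0" and pY: "perp_sq Y \<ge> 0" unfolding perp_sq_def by (auto intro: sum_nonneg)
  have r2: "\<rho>\<^sup>2 < 1" using r0 rho_lt by (simp add: power_less_one_iff abs_of_nonneg)
  have A: "perp_sq (\<lambda>i. \<Sum>j\<in>UNIV. W $ j $ i *\<^sub>R prox \<eta> r (X j - \<eta> *\<^sub>R Y j))
      \<le> \<rho>\<^sup>2 * perp_sq (\<lambda>j. prox \<eta> r (X j - \<eta> *\<^sub>R Y j))"
    using mix_step[OF W_cols] unfolding rho_def .
  also have B: "\<dots> \<le> \<rho>\<^sup>2 * perp_sq (\<lambda>j. X j - \<eta> *\<^sub>R Y j)"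
    by (intro mult_left_mono perp_nonexp[of "prox \<eta> r"] prox_nonexp[OF cpc eta]) auto
  finally have C: "perp_sq (\<lambda>i. \<Sum>j\<in>UNIV. W $ j $ i *\<^sub>R prox \<eta> r (X j - \<eta> *\<^sub>R Y j))
      \<le> \<rho>\<^sup>2 * perp_sq (\<lambda>j. X j - \<eta> *\<^sub>R Y j)" .
  show ?thesis
  proof (cases "\<rho> = 0")
    case True
    have "0 \<le> (1 + \<rho>\<^sup>2) / 2 * perp_sq X + 2 * \<rho>\<^sup>2 * \<eta>\<^sup>2 / (1 - \<rho>\<^sup>2) * perp_sq Y"
      using pX pY r2 by (intro add_nonneg_nonneg mult_nonneg_nonneg divide_nonneg_pos) auto
    thus ?thesis using C True by simp
  next
    case False
    hence rp: "\<rho>\<^sup>2 > 0" using r0 by simp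
    define \<alpha> where "\<alpha> = (1 - \<rho>\<^sup>2) / (2 * \<rho>\<^sup>2)"
    have al: "\<alpha> > 0" unfolding \<alpha>_def using rp r2 by simp
    have "\<rho>\<^sup>2 * perp_sq (\<lambda>j. X j - \<eta> *\<^sub>R Y j) \<le> \<rho>\<^sup>2 * ((1 + \<alpha>) * perp_sq X + (1 + 1 / \<alpha>) * \<eta>\<^sup>2 * perp_sq Y)"
      using perp_combo[OF al, of \<eta> X Y] eta rp by (intro mult_left_mono) auto
    also have "\<dots> = (\<rho>\<^sup>2 * (1 + \<alpha>)) * perp_sq X + (\<rho>\<^sup>2 * (1 + 1 / \<alpha>)) * (\<eta>\<^sup>2 * perp_sq Y)"
      by (simp add: algebra_simps)
    also have "\<rho>\<^sup>2 * (1 + \<alpha>) = (1 + \<rho>\<^sup>2) / 2" unfolding \<alpha>_def using rp by (simp add: field_simps)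
    also have "\<rho>\<^sup>2 * (1 + 1 / \<alpha>) * (\<eta>\<^sup>2 * perp_sq Y) \<le> (2 * \<rho>\<^sup>2 / (1 - \<rho>\<^sup>2)) * (\<eta>\<^sup>2 * perp_sq Y)"
    proof (rule mult_right_mono)
      have "\<rho>\<^sup>2 * (1 + 1 / \<alpha>) = \<rho>\<^sup>2 * (1 + \<rho>\<^sup>2) / (1 - \<rho>\<^sup>2)"
        unfolding \<alpha>_def using rp r2 by (simp add: field_simps)
      also have "\<dots> \<le> 2 * \<rho>\<^sup>2 / (1 - \<rho>\<^sup>2)"
        using rp r2 by (intro divide_right_mono) auto
      finally show "\<rho>\<^sup>2 * (1 + 1 / \<alpha>) \<le> 2 * \<rho>\<^sup>2 / (1 - \<rho>\<^sup>2)" .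
    qed (use pY in simp)
    finally show ?thesis using C by (simp add: algebra_simps)
  qed
qed



lemma perp_meas:
  fixes F :: "'w \<Rightarrow> 'n::finite \<Rightarrow> real^'d::finite"
  assumes "\<And>i. (\<lambda>\<omega>. F \<omega> i) \<in> borel_measurable M"
  shows "(\<lambda>\<omega>. perp_sq (F \<omega>)) \<in> borel_measurable M"
  unfolding perp_sq_def using assms by measurable

lemma state_meas:
  fixes \<xi> :: "nat \<Rightarrow> 'n::finite \<Rightarrow> 'w \<Rightarrow> 's"
    and gF :: "'n \<Rightarrow> real^'d::finite \<Rightarrow> 's \<Rightarrow> real^'d"
  assumes xi_meas: "\<And>k i. \<xi> k i \<in> measurable M (D i)"
    and gF_meas: "\<And>i. (\<lambda>(x, s). gF i x s) \<in> borel_measurable (borel \<Otimes>\<^sub>M D i)"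
    and pc: "continuous_on UNIV (prox \<eta> r)"
  shows "\<forall>i. (\<lambda>\<omega>. fst (dpsgt_state W \<eta> r gF x0 (\<lambda>k i. \<xi> k i \<omega>) t) i) \<in> borel_measurable M
           \<and> (\<lambda>\<omega>. fst (snd (dpsgt_state W \<eta> r gF x0 (\<lambda>k i. \<xi> k i \<omega>) t)) i) \<in> borel_measurable M
           \<and> (\<lambda>\<omega>. snd (snd (dpsgt_state W \<eta> r gF x0 (\<lambda>k i. \<xi> k i \<omega>) t)) i) \<in> borel_measurable M"
proof (induction t)
  case 0 thus ?case by simp
next
  case (Suc t)
  define S where "S \<omega> = dpsgt_state W \<eta> r gF x0 (\<lambda>k i. \<xi> k i \<omega>) t" for \<omega>
  have X[measurable]: "(\<lambda>\<omega>. fst (S \<omega>) i) \<in> borel_measurable M" for i unfolding S_def using Suc by blast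
  have Yp[measurable]: "(\<lambda>\<omega>. fst (snd (S \<omega>)) i) \<in> borel_measurable M" for i unfolding S_def using Suc by blast
  have Gp[measurable]: "(\<lambda>\<omega>. snd (snd (S \<omega>)) i) \<in> borel_measurable M" for i unfolding S_def using Suc by blast
  have G[measurable]: "(\<lambda>\<omega>. gF i (fst (S \<omega>) i) (\<xi> t i \<omega>)) \<in> borel_measurable M" for i
  proof -
    have "(\<lambda>\<omega>. (fst (S \<omega>) i, \<xi> t i \<omega>)) \<in> measurable M (borel \<Otimes>\<^sub>M D i)"
      using X xi_meas by (intro measurable_Pair) auto
    from measurable_compose[OF this gF_meas[of i]] show ?thesis by simp
  qed
  have P[measurable]: "prox \<eta> r \<in> borel_measurable borel"
    by (rule borel_measurable_continuous_onI[OF pc])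
  show ?case unfolding state_Suc S_def[symmetric] Let_def by simp measurable
qed


theorem lemmaB2:
  fixes M :: "'w measure"
    and D :: "'n::finite \<Rightarrow> 's measure"
    and F :: "'n \<Rightarrow> real^'d::finite \<Rightarrow> 's \<Rightarrow> real"
    and gF :: "'n \<Rightarrow> real^'d \<Rightarrow> 's \<Rightarrow> real^'d"
    and f :: "'n \<Rightarrow> real^'d \<Rightarrow> real"
    and gf :: "'n \<Rightarrow> real^'d \<Rightarrow> real^'d"
    and r :: "real^'d \<Rightarrow> ereal"
    and L \<sigma> \<eta> \<rho> :: real
    and W :: "real^'n^'n"
    and E :: "'n \<Rightarrow> 'n \<Rightarrow> bool"
    and x0 :: "'n \<Rightarrow> real^'d"
    and \<xi> :: "nat \<Rightarrow> 'n \<Rightarrow> 'w \<Rightarrow> 's"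
    and t :: nat
  assumes
    \<comment> \<open>problem\<close>
    r_closed_convex: "closed_proper_convex r"
    and D_prob: "\<And>i. prob_space (D i)"
    and f_def: "\<And>i x. x \<in> edom r \<Longrightarrow> integrable (D i) (F i x) \<and> f i x = (\<integral>s. F i x s \<partial>D i)"
    and f_grad: "\<And>i x. x \<in> edom r \<Longrightarrow> (f i has_derivative (\<lambda>h. gf i x \<bullet> h)) (at x within edom r)"
    and f_smooth: "\<And>i x y. x \<in> edom r \<Longrightarrow> y \<in> edom r \<Longrightarrow> norm (gf i x - gf i y) \<le> L * norm (x - y)"
    and phi_bdd: "\<exists>c::real. \<forall>x. ereal c \<le> ereal ((1 / real CARD('n)) * (\<Sum>i\<in>UNIV. f i x)) + r x"
    \<comment> \<open>mixing matrix on a connected graph\<close>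
    and E_sym: "\<And>i j. E i j \<Longrightarrow> E j i"
    and E_conn: "\<And>i j. E\<^sup>*\<^sup>* i j"
    and W_nonneg: "\<And>i j. W $ i $ j \<ge> 0"
    and W_rows: "\<And>i. (\<Sum>j\<in>UNIV. W $ i $ j) = 1"
    and W_cols: "\<And>j. (\<Sum>i\<in>UNIV. W $ i $ j) = 1"
    and W_graph: "\<And>i j. i \<noteq> j \<Longrightarrow> \<not> E i j \<Longrightarrow> W $ i $ j = 0"
    and W_null: "\<And>v. W *v v = v \<Longrightarrow> (\<exists>c. v = (\<chi> i. c))"
    and rho_def: "\<rho> = onorm (\<lambda>v. (W - Jmat) *v v)"
    and rho_lt: "\<rho> < 1"
    \<comment> \<open>stochastic gradients\<close>
    and gF_grad: "\<And>i x s. x \<in> edom r \<Longrightarrow> s \<in> space (D i) \<Longrightarrow>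
                     ((\<lambda>z. F i z s) has_derivative (\<lambda>h. gF i x s \<bullet> h)) (at x)"
    and gF_meas: "\<And>i. (\<lambda>(x, s). gF i x s) \<in> borel_measurable (borel \<Otimes>\<^sub>M D i)"
    and gF_unbiased: "\<And>i x. x \<in> edom r \<Longrightarrow>
                        integrable (D i) (gF i x) \<and> (\<integral>s. gF i x s \<partial>D i) = gf i x"
    and gF_var: "\<And>i x. x \<in> edom r \<Longrightarrow>
                   (\<integral>\<^sup>+s. ennreal ((norm (gF i x s - gf i x))\<^sup>2) \<partial>D i) \<le> ennreal (\<sigma>\<^sup>2)"
    and M_prob: "prob_space M"
    and xi_meas: "\<And>k i. \<xi> k i \<in> measurable M (D i)"
    and xi_dist: "\<And>k i. distr M (D i) (\<xi> k i) = D i"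
    and xi_indep: "prob_space.indep_vars M (\<lambda>(k, i). D i) (\<lambda>(k, i). \<xi> k i) UNIV"
    \<comment> \<open>step size\<close>
    and eta_pos: "\<eta> > 0"
    and t_ge: "t \<ge> 1"
  shows
    "(\<integral>\<^sup>+\<omega>. ennreal (perp_sq (dpsgt_X W \<eta> r gF x0 (\<lambda>k i. \<xi> k i \<omega>) t)) \<partial>M)
     \<le> ennreal ((1 + \<rho>\<^sup>2) / 2) *
          (\<integral>\<^sup>+\<omega>. ennreal (perp_sq (dpsgt_X W \<eta> r gF x0 (\<lambda>k i. \<xi> k i \<omega>) (t - 1))) \<partial>M)
       + ennreal (2 * \<rho>\<^sup>2 * \<eta>\<^sup>2 / (1 - \<rho>\<^sup>2)) *
          (\<integral>\<^sup>+\<omega>. ennreal (perp_sq (dpsgt_Y W \<eta> r gF x0 (\<lambda>k i. \<xi> k i \<omega>) (t - 1))) \<partial>M)"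
  proof -
  obtain s where ts: "t = Suc s" using t_ge by (cases t) auto
  have ts1: "t - 1 = s" using ts by simp
  have pc: "continuous_on UNIV (prox \<eta> r)" by (rule prox_cont[OF r_closed_convex eta_pos])
  note SM = state_meas[where \<xi>=\<xi> and gF=gF and D=D and M=M, OF xi_meas gF_meas pc]
  have mX: "(\<lambda>\<omega>. perp_sq (dpsgt_X W \<eta> r gF x0 (\<lambda>k i. \<xi> k i \<omega>) s)) \<in> borel_measurable M"
    unfolding dpsgt_X_def by (rule perp_meas) (use SM[where t=s] in blast)
  have mY: "(\<lambda>\<omega>. perp_sq (dpsgt_Y W \<eta> r gF x0 (\<lambda>k i. \<xi> k i \<omega>) s)) \<in> borel_measurable M"
    unfolding dpsgt_Y_def by (rule perp_meas) (use SM[where t="Suc s"] in blast)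
  have r0: "\<rho> \<ge> 0" unfolding rho_def by (rule onorm_pos_le) simp
  have r2: "\<rho>\<^sup>2 < 1" using r0 rho_lt by (simp add: power_less_one_iff abs_of_nonneg)
  define a where "a = (1 + \<rho>\<^sup>2) / 2"
  define b where "b = 2 * \<rho>\<^sup>2 * \<eta>\<^sup>2 / (1 - \<rho>\<^sup>2)"
  have a0: "a \<ge> 0" unfolding a_def by simp
  have b0: "b \<ge> 0" unfolding b_def using r2 by simp
  have pw: "ennreal (perp_sq (dpsgt_X W \<eta> r gF x0 (\<lambda>k i. \<xi> k i \<omega>) t))
      \<le> ennreal a * ennreal (perp_sq (dpsgt_X W \<eta> r gF x0 (\<lambda>k i. \<xi> k i \<omega>) s))
        + ennreal b * ennreal (perp_sq (dpsgt_Y W \<eta> r gF x0 (\<lambda>k i. \<xi> k i \<omega>) s))" for \<omega>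
  proof -
    let ?X = "dpsgt_X W \<eta> r gF x0 (\<lambda>k i. \<xi> k i \<omega>) s"
    let ?Y = "dpsgt_Y W \<eta> r gF x0 (\<lambda>k i. \<xi> k i \<omega>) s"
    have pX: "perp_sq ?X \<ge> 0" and pY: "perp_sq ?Y \<ge> 0" unfolding perp_sq_def by (auto intro: sum_nonneg)
    have "perp_sq (dpsgt_X W \<eta> r gF x0 (\<lambda>k i. \<xi> k i \<omega>) t) \<le> a * perp_sq ?X + b * perp_sq ?Y"
      unfolding ts X_Suc a_def b_def by (rule det_bound[OF r_closed_convex eta_pos W_cols rho_def rho_lt])
    hence "ennreal (perp_sq (dpsgt_X W \<eta> r gF x0 (\<lambda>k i. \<xi> k i \<omega>) t)) \<le> ennreal (a * perp_sq ?X + b * perp_sq ?Y)"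
      by (rule ennreal_leI)
    also have "\<dots> = ennreal a * ennreal (perp_sq ?X) + ennreal b * ennreal (perp_sq ?Y)"
      using a0 b0 pX pY by (simp add: ennreal_plus ennreal_mult)
    finally show ?thesis .
  qed
  have "(\<integral>\<^sup>+\<omega>. ennreal (perp_sq (dpsgt_X W \<eta> r gF x0 (\<lambda>k i. \<xi> k i \<omega>) t)) \<partial>M)
      \<le> (\<integral>\<^sup>+\<omega>. ennreal a * ennreal (perp_sq (dpsgt_X W \<eta> r gF x0 (\<lambda>k i. \<xi> k i \<omega>) s))
        + ennreal b * ennreal (perp_sq (dpsgt_Y W \<eta> r gF x0 (\<lambda>k i. \<xi> k i \<omega>) s)) \<partial>M)"
    by (rule nn_integral_mono) (rule pw)
  also have "\<dots> = ennreal a * (\<integral>\<^sup>+\<omega>. ennreal (perp_sq (dpsgt_X W \<eta> r gF x0 (\<lambda>k i. \<xi> k i \<omega>) s)) \<partial>M)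
        + ennreal b * (\<integral>\<^sup>+\<omega>. ennreal (perp_sq (dpsgt_Y W \<eta> r gF x0 (\<lambda>k i. \<xi> k i \<omega>) s)) \<partial>M)"
    using mX mY by (simp add: nn_integral_add nn_integral_cmult)
  finally show ?thesis unfolding ts1 a_def b_def .
qed

end
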